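(* Let $w \in S_n$. If $w$ contains a $321$ pattern, then the Schubert polynomial $\mathfrak{S}_w$ is not a complete homogeneous monomial.
   Context: $h^i_j$ is the complete homogeneous symmetric polynomial of degree $j$ in $x_1,\dots,x_i$; a complete homogeneous monomial is a product $h^1_{a_1}h^2_{a_2}\cdots$ with nonnegative integers $a_i$, finitely many nonzero. Schubert polynomials: $\mathfrak{S}_{w_0} = x_1^{n-1}\cdots x_{n-1}$ for the longest $w_0 \in S_n$, and $\partial_i\mathfrak{S}_w = \mathfrak{S}_{ws_i}$ if $\ell(ws_i)=\ell(w)-1$, $0$ otherwise, where $\partial_i f = (f-s_if)/(x_i-x_{i+1})$. $w$ contains a $321$ pattern if there are $i<j<k$ with $w(i)>w(j)>w(k)$. *)

theory Defs
  imports "HOL-Library.Poly_Mapping" "HOL-Combinatorics.Combinatorics"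
begin

text \<open>Polynomials in variables x_1, x_2, ... (indexed by nat) with integer coefficients:
  maps from exponent vectors (nat =>0 nat) to coefficients.\<close>
type_synonym mpoly = "(nat \<Rightarrow>\<^sub>0 nat) \<Rightarrow>\<^sub>0 int"

definition var :: "nat \<Rightarrow> mpoly" where
  "var i = Poly_Mapping.single (Poly_Mapping.single i 1) 1"

definition mono :: "(nat \<Rightarrow>\<^sub>0 nat) \<Rightarrow> mpoly" where
  "mono m = Poly_Mapping.single m 1"

definition swap_exp :: "nat \<Rightarrow> (nat \<Rightarrow>\<^sub>0 nat) \<Rightarrow> (nat \<Rightarrow>\<^sub>0 nat)" where
  "swap_exp i m = Abs_poly_mapping (\<lambda>k. Poly_Mapping.lookup m (transpose i (Suc i) k))"

definition swap_var :: "nat \<Rightarrow> mpoly \<Rightarrow> mpoly" where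
  "swap_var i f = Abs_poly_mapping (\<lambda>m. Poly_Mapping.lookup f (swap_exp i m))"

definition divdiff :: "nat \<Rightarrow> mpoly \<Rightarrow> mpoly" where
  "divdiff i f = (THE g. (var i - var (Suc i)) * g = f - swap_var i f)"

definition inv_len :: "nat \<Rightarrow> (nat \<Rightarrow> nat) \<Rightarrow> nat" where
  "inv_len n w = card {(i, j). 1 \<le> i \<and> i < j \<and> j \<le> n \<and> w i > w j}"

definition longest :: "nat \<Rightarrow> nat \<Rightarrow> nat" where
  "longest n i = (if i \<in> {1..n} then n + 1 - i else i)"

definition is_schubert_family :: "nat \<Rightarrow> ((nat \<Rightarrow> nat) \<Rightarrow> mpoly) \<Rightarrow> bool" where
  "is_schubert_family n S \<longleftrightarrow>
     S (longest n) = (\<Prod>i\<in>{1..<n}. var i ^ (n - i)) \<and>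
     (\<forall>w i. w permutes {1..n} \<longrightarrow> 1 \<le> i \<longrightarrow> i < n \<longrightarrow>
        divdiff i (S w) =
          (if inv_len n (w \<circ> transpose i (Suc i)) + 1 = inv_len n w
           then S (w \<circ> transpose i (Suc i)) else 0))"

definition complete_h :: "nat \<Rightarrow> nat \<Rightarrow> mpoly" where
  "complete_h i j = (\<Sum>m\<in>{m. Poly_Mapping.keys m \<subseteq> {1..i} \<and> (\<Sum>k\<in>{1..i}. Poly_Mapping.lookup m k) = j}. mono m)"

definition complete_hom_monomial :: "mpoly \<Rightarrow> bool" where
  "complete_hom_monomial f \<longleftrightarrow> (\<exists>a :: nat \<Rightarrow>\<^sub>0 nat. 0 \<notin> Poly_Mapping.keys a \<and> f = (\<Prod>i\<in>Poly_Mapping.keys a. complete_h i (Poly_Mapping.lookup a i)))"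

definition contains_321 :: "nat \<Rightarrow> (nat \<Rightarrow> nat) \<Rightarrow> bool" where
  "contains_321 n w \<longleftrightarrow> (\<exists>i j k. 1 \<le> i \<and> i < j \<and> j < k \<and> k \<le> n \<and> w i > w j \<and> w j > w k)"

end

theory Submission
  imports Defs
begin


definition upd2 :: "nat \<Rightarrow> nat \<Rightarrow> nat \<Rightarrow> (nat \<Rightarrow>\<^sub>0 nat) \<Rightarrow> (nat \<Rightarrow>\<^sub>0 nat)" where
  "upd2 i g h m = Abs_poly_mapping (\<lambda>k. if k = i then g else if k = Suc i then h else Poly_Mapping.lookup m k)"

lemma lookup_upd2: "Poly_Mapping.lookup (upd2 i g h m) k = (if k = i then g else if k = Suc i then h else Poly_Mapping.lookup m k)"
proof -
  have "{k. (if k = i then g else if k = Suc i then h else Poly_Mapping.lookup m k) \<noteq> 0} \<subseteq> Poly_Mapping.keys m \<union> {i, Suc i}"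
    by (auto simp: in_keys_iff)
  then have "finite {k. (if k = i then g else if k = Suc i then h else Poly_Mapping.lookup m k) \<noteq> 0}"
    by (rule finite_subset) simp
  then show ?thesis unfolding upd2_def by simp
qed

lemma lookup_swap_exp: "Poly_Mapping.lookup (swap_exp i m) k = Poly_Mapping.lookup m (transpose i (Suc i) k)"
proof -
  have "{k. Poly_Mapping.lookup m (transpose i (Suc i) k) \<noteq> 0} = transpose i (Suc i) ` Poly_Mapping.keys m"
    by (auto simp: in_keys_iff intro: rev_image_eqI[of "transpose i (Suc i) x" for x])
  then have "finite {k. Poly_Mapping.lookup m (transpose i (Suc i) k) \<noteq> 0}" by simp
  then show ?thesis unfolding swap_exp_def by simp
qed

lemma swap_exp_upd2: "swap_exp i m = upd2 i (Poly_Mapping.lookup m (Suc i)) (Poly_Mapping.lookup m i) m"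
  by (rule poly_mapping_eqI) (simp add: lookup_swap_exp lookup_upd2 transpose_def)

lemma swap_exp_invol [simp]: "swap_exp i (swap_exp i m) = m"
  by (rule poly_mapping_eqI) (simp add: lookup_swap_exp)

lemma lookup_swap_var: "Poly_Mapping.lookup (swap_var i f) m = Poly_Mapping.lookup f (swap_exp i m)"
proof -
  have "{m. Poly_Mapping.lookup f (swap_exp i m) \<noteq> 0} = swap_exp i ` Poly_Mapping.keys f"
    by (auto simp: in_keys_iff intro: rev_image_eqI[of "swap_exp i x" for x])
  then have "finite {m. Poly_Mapping.lookup f (swap_exp i m) \<noteq> 0}" by simp
  then show ?thesis unfolding swap_var_def by simp
qed

lemma upd2_same: "upd2 i (Poly_Mapping.lookup m i) (Poly_Mapping.lookup m (Suc i)) m = m"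
  by (rule poly_mapping_eqI) (simp add: lookup_upd2)

lemma var_mult_mono: "var k * Defs.mono p = Defs.mono (Poly_Mapping.single k 1 + p)"
  by (simp add: var_def Defs.mono_def mult_single)

lemma single_upd2_i: "Poly_Mapping.single i 1 + upd2 i g h m = upd2 i (Suc g) h m"
  by (rule poly_mapping_eqI) (simp add: lookup_upd2 lookup_add lookup_single when_def)

lemma single_upd2_Suc: "Poly_Mapping.single (Suc i) 1 + upd2 i g h m = upd2 i g (Suc h) m"
  by (rule poly_mapping_eqI) (simp add: lookup_upd2 lookup_add lookup_single when_def)

definition ddm :: "nat \<Rightarrow> (nat \<Rightarrow>\<^sub>0 nat) \<Rightarrow> mpoly" where
  "ddm i m = (let a = Poly_Mapping.lookup m i; b = Poly_Mapping.lookup m (Suc i) in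
     if b < a then (\<Sum>g\<in>{b..<a}. Defs.mono (upd2 i g (a + b - 1 - g) m))
     else - (\<Sum>g\<in>{a..<b}. Defs.mono (upd2 i g (a + b - 1 - g) m)))"

lemma telescope_gen:
  "(var i - var (Suc i)) * Defs.mono (upd2 i g h m) = Defs.mono (upd2 i (Suc g) h m) - Defs.mono (upd2 i g (Suc h) m)"
  by (simp only: left_diff_distrib var_mult_mono single_upd2_i single_upd2_Suc)

lemma ddm_eq: "(var i - var (Suc i)) * ddm i m = Defs.mono m - Defs.mono (swap_exp i m)"
proof -
  define a where "a = Poly_Mapping.lookup m i"
  define b where "b = Poly_Mapping.lookup m (Suc i)"
  define F where "F g = Defs.mono (upd2 i g (a + b - g) m)" for g
  have step: "(var i - var (Suc i)) * Defs.mono (upd2 i g (a + b - 1 - g) m) = F (Suc g) - F g"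
    if "g < a + b" for g
  proof -
    have h1: "a + b - 1 - g = a + b - Suc g" by simp
    have h2: "Suc (a + b - 1 - g) = a + b - g" using that by simp
    show ?thesis unfolding F_def h1 using telescope_gen[of i g "a + b - 1 - g" m, unfolded h2, unfolded h1] .
  qed
  have Fa: "F a = Defs.mono m" by (simp add: F_def a_def b_def upd2_same)
  have Fb: "F b = Defs.mono (swap_exp i m)" by (simp add: F_def a_def b_def swap_exp_upd2)
  show ?thesis
  proof (cases "b < a")
    case True
    have "(var i - var (Suc i)) * ddm i m = (\<Sum>g\<in>{b..<a}. (var i - var (Suc i)) * Defs.mono (upd2 i g (a + b - 1 - g) m))"
      using True by (simp add: ddm_def a_def[symmetric] b_def[symmetric] Let_def sum_distrib_left)
    also have "\<dots> = (\<Sum>g\<in>{b..<a}. F (Suc g) - F g)"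
      by (rule sum.cong[OF refl], rule step) auto
    also have "\<dots> = F a - F b" using True by (simp add: sum_Suc_diff')
    finally show ?thesis using Fa Fb by simp
  next
    case False
    have "(var i - var (Suc i)) * ddm i m = - (\<Sum>g\<in>{a..<b}. (var i - var (Suc i)) * Defs.mono (upd2 i g (a + b - 1 - g) m))"
      using False by (simp add: ddm_def a_def[symmetric] b_def[symmetric] Let_def sum_distrib_left)
    also have "\<dots> = - (\<Sum>g\<in>{a..<b}. F (Suc g) - F g)"
      by (subst sum.cong[OF refl], rule step) auto
    also have "\<dots> = F a - F b" using False by (simp add: sum_Suc_diff')
    finally show ?thesis using Fa Fb by simp
  qed
qed



definition dd :: "nat \<Rightarrow> mpoly \<Rightarrow> mpoly" where
  "dd i f = (\<Sum>m\<in>Poly_Mapping.keys f. of_int (Poly_Mapping.lookup f m) * ddm i m)"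

lemma of_int_mono: "(of_int c :: mpoly) * Defs.mono m = Poly_Mapping.single m c"
  by (simp add: Defs.mono_def mult_single flip: single_of_int)

lemma poly_expand: "f = (\<Sum>m\<in>Poly_Mapping.keys f. Poly_Mapping.single m (Poly_Mapping.lookup f m))"
proof (rule poly_mapping_eqI)
  fix k
  have "Poly_Mapping.lookup (\<Sum>m\<in>Poly_Mapping.keys f. Poly_Mapping.single m (Poly_Mapping.lookup f m)) k
     = (\<Sum>m\<in>Poly_Mapping.keys f. (if m = k then Poly_Mapping.lookup f m else 0))"
    by (simp add: lookup_sum lookup_single when_def)
  also have "\<dots> = Poly_Mapping.lookup f k"
    by (simp add: sum.delta in_keys_iff)
  finally show "Poly_Mapping.lookup f k = Poly_Mapping.lookup (\<Sum>m\<in>Poly_Mapping.keys f. Poly_Mapping.single m (Poly_Mapping.lookup f m)) k" by simp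
qed

lemma swap_expand: "swap_var i f = (\<Sum>m\<in>Poly_Mapping.keys f. Poly_Mapping.single (swap_exp i m) (Poly_Mapping.lookup f m))"
proof (rule poly_mapping_eqI)
  fix k
  have "Poly_Mapping.lookup (\<Sum>m\<in>Poly_Mapping.keys f. Poly_Mapping.single (swap_exp i m) (Poly_Mapping.lookup f m)) k
     = (\<Sum>m\<in>Poly_Mapping.keys f. (if m = swap_exp i k then Poly_Mapping.lookup f m else 0))"
    unfolding lookup_sum
    by (rule sum.cong) (auto simp: lookup_single when_def dest: arg_cong[of _ _ "swap_exp i"])
  also have "\<dots> = Poly_Mapping.lookup f (swap_exp i k)"
    by (simp add: sum.delta in_keys_iff)
  finally show "Poly_Mapping.lookup (swap_var i f) k = Poly_Mapping.lookup (\<Sum>m\<in>Poly_Mapping.keys f. Poly_Mapping.single (swap_exp i m) (Poly_Mapping.lookup f m)) k"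
    by (simp add: lookup_swap_var lookup_sum)
qed

lemma dd_eq: "(var i - var (Suc i)) * dd i f = f - swap_var i f"
proof -
  have "(var i - var (Suc i)) * dd i f = (\<Sum>m\<in>Poly_Mapping.keys f. of_int (Poly_Mapping.lookup f m) * ((var i - var (Suc i)) * ddm i m))"
    by (simp add: dd_def sum_distrib_left algebra_simps)
  also have "\<dots> = (\<Sum>m\<in>Poly_Mapping.keys f. Poly_Mapping.single m (Poly_Mapping.lookup f m) - Poly_Mapping.single (swap_exp i m) (Poly_Mapping.lookup f m))"
    by (rule sum.cong) (simp_all add: ddm_eq right_diff_distrib of_int_mono)
  also have "\<dots> = f - swap_var i f"
    by (simp add: sum_subtractf flip: poly_expand swap_expand)
  finally show ?thesis .
qed

lemma single_i_neq: "Poly_Mapping.single i (1::nat) \<noteq> Poly_Mapping.single (Suc i) 1"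
proof
  assume "Poly_Mapping.single i (1::nat) = Poly_Mapping.single (Suc i) 1"
  then have "Poly_Mapping.lookup (Poly_Mapping.single i (1::nat)) i = Poly_Mapping.lookup (Poly_Mapping.single (Suc i) 1) i" by simp
  then show False by (simp add: lookup_single)
qed

lemma var_diff_nz: "var i - var (Suc i) \<noteq> 0"
proof
  assume "var i - var (Suc i) = 0"
  then have "var i = var (Suc i)" by simp
  then have "Poly_Mapping.lookup (var i) (Poly_Mapping.single i 1) = Poly_Mapping.lookup (var (Suc i)) (Poly_Mapping.single i 1)" by simp
  then show False using single_i_neq[of i] unfolding var_def by (simp add: lookup_single when_def)
qed

lemma divdiff_eq: "divdiff i f = dd i f"
  unfolding divdiff_def
proof (rule the_equality)
  show "(var i - var (Suc i)) * dd i f = f - swap_var i f" by (rule dd_eq)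
  fix g assume "(var i - var (Suc i)) * g = f - swap_var i f"
  then have "(var i - var (Suc i)) * g = (var i - var (Suc i)) * dd i f" by (simp add: dd_eq)
  then show "g = dd i f" using var_diff_nz by simp
qed

lemma keys_mono: "Poly_Mapping.keys (Defs.mono m) = {m}"
  by (simp add: Defs.mono_def)

lemma keys_ddm: "Poly_Mapping.keys (ddm i m) \<subseteq>
   {upd2 i g (Poly_Mapping.lookup m i + Poly_Mapping.lookup m (Suc i) - 1 - g) m | g.
      min (Poly_Mapping.lookup m i) (Poly_Mapping.lookup m (Suc i)) \<le> g \<and> g < max (Poly_Mapping.lookup m i) (Poly_Mapping.lookup m (Suc i))}"
proof -
  define a where "a = Poly_Mapping.lookup m i"
  define b where "b = Poly_Mapping.lookup m (Suc i)"
  show ?thesis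
  proof (cases "b < a")
    case True
    have "Poly_Mapping.keys (ddm i m) \<subseteq> (\<Union>g\<in>{b..<a}. Poly_Mapping.keys (Defs.mono (upd2 i g (a + b - 1 - g) m)))"
      using True by (simp add: ddm_def a_def[symmetric] b_def[symmetric] Let_def keys_sum)
    also have "\<dots> \<subseteq> {upd2 i g (a + b - 1 - g) m | g. min a b \<le> g \<and> g < max a b}"
      using True by (auto simp: keys_mono)
    finally show ?thesis by (simp add: a_def b_def)
  next
    case False
    have "Poly_Mapping.keys (ddm i m) \<subseteq> (\<Union>g\<in>{a..<b}. Poly_Mapping.keys (Defs.mono (upd2 i g (a + b - 1 - g) m)))"
      using False by (simp add: ddm_def a_def[symmetric] b_def[symmetric] Let_def keys_sum)
    also have "\<dots> \<subseteq> {upd2 i g (a + b - 1 - g) m | g. min a b \<le> g \<and> g < max a b}"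
      using False by (auto simp: keys_mono)
    finally show ?thesis by (simp add: a_def b_def)
  qed
qed

lemma keys_of_int_mult: "Poly_Mapping.keys ((of_int c :: mpoly) * p) \<subseteq> Poly_Mapping.keys p"
proof -
  have "Poly_Mapping.keys ((of_int c :: mpoly) * p) \<subseteq> {a + b | a b. a \<in> Poly_Mapping.keys (of_int c :: mpoly) \<and> b \<in> Poly_Mapping.keys p}"
    by (rule keys_mult)
  also have "\<dots> \<subseteq> Poly_Mapping.keys p"
    by (auto simp flip: single_of_int split: if_splits)
  finally show ?thesis .
qed

lemma keys_dd: "Poly_Mapping.keys (dd i f) \<subseteq> (\<Union>m\<in>Poly_Mapping.keys f. Poly_Mapping.keys (ddm i m))"
proof -
  have "Poly_Mapping.keys (dd i f) \<subseteq> (\<Union>m\<in>Poly_Mapping.keys f. Poly_Mapping.keys (of_int (Poly_Mapping.lookup f m) * ddm i m))"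
    unfolding dd_def by (rule keys_sum)
  also have "\<dots> \<subseteq> (\<Union>m\<in>Poly_Mapping.keys f. Poly_Mapping.keys (ddm i m))"
    using keys_of_int_mult by blast
  finally show ?thesis .
qed



definition Invs :: "nat \<Rightarrow> (nat \<Rightarrow> nat) \<Rightarrow> (nat \<times> nat) set" where
  "Invs n w = {(i, j). 1 \<le> i \<and> i < j \<and> j \<le> n \<and> w i > w j}"

lemma inv_len_Invs: "inv_len n w = card (Invs n w)"
  by (simp add: inv_len_def Invs_def)

lemma Invs_sub: "Invs n w \<subseteq> {1..n} \<times> {1..n}"
  by (auto simp: Invs_def)

lemma finite_Invs: "finite (Invs n w)"
  by (rule finite_subset[OF Invs_sub]) simp

lemma inv_len_le: "inv_len n w \<le> n * n"
proof -
  have "card (Invs n w) \<le> card ({1..n} \<times> {1..n})"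
    by (rule card_mono[OF _ Invs_sub]) simp
  then show ?thesis by (simp add: inv_len_Invs)
qed

lemma inv_len_swap:
  assumes "1 \<le> i" "i < n" "w i < w (Suc i)"
  shows "inv_len n (w \<circ> transpose i (Suc i)) = Suc (inv_len n w)"
proof -
  let ?t = "transpose i (Suc i)"
  let ?u = "w \<circ> ?t"
  define phi where "phi = (\<lambda>(p::nat, q::nat). (?t p, ?t q))"
  have inj: "inj phi"
    unfolding inj_def phi_def by (auto dest: transpose_eq_imp_eq)
  have eq: "Invs n ?u = insert (i, Suc i) (phi ` Invs n w)"
  proof (rule set_eqI)
    fix x :: "nat \<times> nat"
    obtain p q where x: "x = (p, q)" by (cases x)
    have "(p, q) \<in> Invs n ?u \<longleftrightarrow> (p, q) = (i, Suc i) \<or> (?t p, ?t q) \<in> Invs n w"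
      using assms unfolding Invs_def by (auto simp: transpose_def split: if_splits)
    moreover have "(?t p, ?t q) \<in> Invs n w \<longleftrightarrow> (p, q) \<in> phi ` Invs n w"
    proof
      assume "(?t p, ?t q) \<in> Invs n w"
      then show "(p, q) \<in> phi ` Invs n w"
        by (intro rev_image_eqI[of "(?t p, ?t q)"]) (auto simp: phi_def)
    next
      assume "(p, q) \<in> phi ` Invs n w"
      then obtain p' q' where "(p', q') \<in> Invs n w" "p = ?t p'" "q = ?t q'"
        by (auto simp: phi_def)
      then show "(?t p, ?t q) \<in> Invs n w" by simp
    qed
    ultimately show "x \<in> Invs n ?u \<longleftrightarrow> x \<in> insert (i, Suc i) (phi ` Invs n w)"
      using x by auto
  qed
  have notin: "(i, Suc i) \<notin> phi ` Invs n w"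
  proof
    assume "(i, Suc i) \<in> phi ` Invs n w"
    then obtain p q where pq: "(p, q) \<in> Invs n w" "?t p = i" "?t q = Suc i"
      by (auto simp: phi_def)
    then have "p = Suc i" "q = i" by (auto simp: transpose_eq_iff)
    then show False using pq(1) by (auto simp: Invs_def)
  qed
  have "card (Invs n ?u) = Suc (card (phi ` Invs n w))"
    using eq notin finite_Invs by simp
  also have "card (phi ` Invs n w) = card (Invs n w)"
    by (rule card_image) (rule inj_on_subset[OF inj], simp)
  finally show ?thesis unfolding inv_len_Invs .
qed

lemma decr_chain:
  assumes "\<And>p. k \<le> p \<Longrightarrow> p < j \<Longrightarrow> w (Suc p) < w p" "k \<le> j"
  shows "w j + (j - k) \<le> w k"
  using assms
proof (induction j)
  case 0 then show ?case by simp
next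
  case (Suc j)
  show ?case
  proof (cases "k = Suc j")
    case True then show ?thesis by simp
  next
    case False
    then have "k \<le> j" using Suc.prems by simp
    then have "w j + (j - k) \<le> w k" using Suc by simp
    moreover have "w (Suc j) < w j" using Suc.prems(1)[of j] \<open>k \<le> j\<close> by simp
    ultimately show ?thesis using \<open>k \<le> j\<close> by simp
  qed
qed

lemma no_ascent_longest:
  assumes perm: "w permutes {1..n}" and na: "\<And>i. 1 \<le> i \<Longrightarrow> i < n \<Longrightarrow> w (Suc i) < w i"
  shows "w = longest n"
proof
  fix k
  show "w k = longest n k"
  proof (cases "k \<in> {1..n}")
    case False
    have "w k = k" by (rule permutes_not_in[OF perm False])
    moreover have "longest n k = k" unfolding longest_def using False by (rule if_not_P)
    ultimately show ?thesis by simp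
  next
    case True
    have img: "w j \<in> {1..n}" if "j \<in> {1..n}" for j
      using permutes_in_image[OF perm] that by simp
    have "w k + (k - 1) \<le> w 1"
      by (rule decr_chain) (use na True in auto)
    moreover have "w n + (n - k) \<le> w k"
      by (rule decr_chain) (use na True in auto)
    moreover have "w 1 \<le> n" "1 \<le> w n" using img[of 1] img[of n] True by auto
    ultimately have "w k = n + 1 - k" using True by auto
    then show ?thesis using True by (simp add: longest_def)
  qed
qed

definition J :: "nat \<Rightarrow> (nat \<Rightarrow> nat) \<Rightarrow> nat \<Rightarrow> nat set" where
  "J n w k = {j. k \<le> j \<and> j \<le> n \<and> (\<exists>p. k \<le> p \<and> p < j \<and> w j < w p)}"

definition Q :: "nat \<Rightarrow> (nat \<Rightarrow> nat) \<Rightarrow> nat \<Rightarrow> nat" where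
  "Q n w k = card (J n w k)"

lemma finite_J: "finite (J n w k)"
  by (rule finite_subset[of _ "{..n}"]) (auto simp: J_def)

lemma Q_mono: "Q n w (Suc k) \<le> Q n w k"
  unfolding Q_def by (rule card_mono[OF finite_J]) (unfold J_def, blast dest: Suc_leD)

lemma Q_longest: "n - k \<le> Q n (longest n) k" if "1 \<le> k"
proof -
  have "{Suc k..n} \<subseteq> J n (longest n) k"
    using that by (auto simp: J_def longest_def intro!: exI[of _ k])
  then have "card {Suc k..n} \<le> Q n (longest n) k"
    unfolding Q_def by (rule card_mono[OF finite_J])
  then show ?thesis by simp
qed

lemma Q_i:
  assumes "w i < w (Suc i)"
  shows "Q n (w \<circ> transpose i (Suc i)) i \<le> Suc (Q n w (Suc i))"
proof -
  have "J n (w \<circ> transpose i (Suc i)) i \<subseteq> insert (Suc i) (J n w (Suc i))"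
  proof
    fix j assume "j \<in> J n (w \<circ> transpose i (Suc i)) i"
    then obtain p where p: "i \<le> j" "j \<le> n" "i \<le> p" "p < j" "w (transpose i (Suc i) j) < w (transpose i (Suc i) p)"
      by (auto simp: J_def)
    show "j \<in> insert (Suc i) (J n w (Suc i))"
    proof (cases "j = Suc i")
      case False
      then have j2: "Suc (Suc i) \<le> j" using p by auto
      then have tj: "transpose i (Suc i) j = j" by simp
      show ?thesis
      proof (cases "p \<le> Suc i")
        case True
        then have "w (transpose i (Suc i) p) \<le> w (Suc i)"
          using p(3) assms by (auto simp: transpose_def le_Suc_eq)
        then have "w j < w (Suc i)" using p(5) tj by simp
        then show ?thesis using j2 p by (auto simp: J_def)
      next
        case False
        then have "transpose i (Suc i) p = p" by simp
        then show ?thesis using p tj False by (auto simp: J_def intro!: exI[of _ p])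
      qed
    qed simp
  qed
  then have "card (J n (w \<circ> transpose i (Suc i)) i) \<le> card (insert (Suc i) (J n w (Suc i)))"
    by (rule card_mono[rotated]) (simp add: finite_J)
  also have "\<dots> \<le> Suc (card (J n w (Suc i)))" by (simp add: card_insert_if finite_J)
  finally show ?thesis by (simp add: Q_def)
qed

lemma Q_Suc_i:
  assumes "w i < w (Suc i)"
  shows "Q n (w \<circ> transpose i (Suc i)) (Suc i) \<le> Q n w (Suc i)"
proof -
  have "J n (w \<circ> transpose i (Suc i)) (Suc i) \<subseteq> J n w (Suc i)"
  proof
    fix j assume "j \<in> J n (w \<circ> transpose i (Suc i)) (Suc i)"
    then obtain p where p: "Suc i \<le> j" "j \<le> n" "Suc i \<le> p" "p < j" "w (transpose i (Suc i) j) < w (transpose i (Suc i) p)"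
      by (auto simp: J_def)
    then have tj: "transpose i (Suc i) j = j" by simp
    show "j \<in> J n w (Suc i)"
    proof (cases "p = Suc i")
      case True
      then have "w j < w (Suc i)" using p(5) tj assms by simp
      then show ?thesis using p True by (auto simp: J_def)
    next
      case False
      then have "transpose i (Suc i) p = p" using p by simp
      then show ?thesis using p tj by (auto simp: J_def)
    qed
  qed
  then show ?thesis unfolding Q_def by (rule card_mono[OF finite_J])
qed

lemma Q_other_big:
  assumes "Suc i < k"
  shows "Q n (w \<circ> transpose i (Suc i)) k \<le> Q n w k"
proof -
  have "J n (w \<circ> transpose i (Suc i)) k \<subseteq> J n w k"
  proof
    fix j assume "j \<in> J n (w \<circ> transpose i (Suc i)) k"
    then obtain p where p: "k \<le> j" "j \<le> n" "k \<le> p" "p < j" "w (transpose i (Suc i) j) < w (transpose i (Suc i) p)"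
      by (auto simp: J_def)
    then have "transpose i (Suc i) j = j" "transpose i (Suc i) p = p" using assms by auto
    then show "j \<in> J n w k" using p by (auto simp: J_def)
  qed
  then show ?thesis unfolding Q_def by (rule card_mono[OF finite_J])
qed

lemma Q_other_small:
  assumes "1 \<le> k" "k < i" "w i < w (Suc i)" "i < n"
    and desc: "\<And>p. 1 \<le> p \<Longrightarrow> p < i \<Longrightarrow> w (Suc p) < w p"
  shows "Q n (w \<circ> transpose i (Suc i)) k \<le> Q n w k"
proof -
  let ?t = "transpose i (Suc i)"
  have chain: "w q < w k" if "k < q" "q \<le> i" for q
  proof -
    have "w q + (q - k) \<le> w k"
      by (rule decr_chain) (use desc assms that in auto)
    then show ?thesis using that by simp
  qed
  have "J n (w \<circ> ?t) k \<subseteq> ?t ` J n w k"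
  proof
    fix j assume "j \<in> J n (w \<circ> ?t) k"
    then obtain p where p: "k \<le> j" "j \<le> n" "k \<le> p" "p < j" "w (?t j) < w (?t p)"
      by (auto simp: J_def)
    have "?t j \<in> J n w k"
    proof (cases "j = i")
      case True
      then have "p < i" using p by simp
      then have "?t p = p" by simp
      then show ?thesis using p True \<open>p < i\<close> assms(2) assms(4) by (auto simp: J_def intro!: exI[of _ p])
    next
      case ji: False
      show ?thesis
      proof (cases "j = Suc i")
        case True
        then show ?thesis using chain[of i] assms p by (auto simp: J_def intro!: exI[of _ k])
      next
        case False
        then have tj: "?t j = j" using ji by simp
        show ?thesis
        proof (cases "p = i")
          case True
          then have "Suc i < j" using p ji False by simp
          then show ?thesis using p tj True by (auto simp: J_def intro!: exI[of _ "Suc i"])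
        next
          case pi: False
          show ?thesis
          proof (cases "p = Suc i")
            case True
            then show ?thesis using p tj assms(2) by (auto simp: J_def intro!: exI[of _ i])
          next
            case False
            then have "?t p = p" using pi by simp
            then show ?thesis using p tj by (auto simp: J_def)
          qed
        qed
      qed
    qed
    then show "j \<in> ?t ` J n w k" by (intro rev_image_eqI[of "?t j"]) simp_all
  qed
  then have "card (J n (w \<circ> ?t) k) \<le> card (?t ` J n w k)"
    by (rule card_mono[rotated]) (simp add: finite_J)
  also have "\<dots> \<le> card (J n w k)" by (rule card_image_le[OF finite_J])
  finally show ?thesis by (simp add: Q_def)
qed

lemma Q_321:
  assumes "contains_321 n w"
  shows "Q n w 1 < inv_len n w"
proof -
  obtain i j k where ijk: "1 \<le> i" "i < j" "j < k" "k \<le> n" "w i > w j" "w j > w k"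
    using assms by (auto simp: contains_321_def)
  have img: "J n w 1 = snd ` Invs n w"
  proof
    show "J n w 1 \<subseteq> snd ` Invs n w"
    proof
      fix x assume "x \<in> J n w 1"
      then obtain p where "1 \<le> x" "x \<le> n" "1 \<le> p" "p < x" "w x < w p" by (auto simp: J_def)
      then show "x \<in> snd ` Invs n w" by (intro rev_image_eqI[of "(p, x)"]) (auto simp: Invs_def)
    qed
  next
    show "snd ` Invs n w \<subseteq> J n w 1" by (auto simp: Invs_def J_def)
  qed
  have ninj: "\<not> inj_on snd (Invs n w)"
  proof
    assume "inj_on snd (Invs n w)"
    moreover have "(i, k) \<in> Invs n w" "(j, k) \<in> Invs n w" using ijk by (auto simp: Invs_def)
    ultimately have "(i, k) = (j, k)" using inj_onD[of snd "Invs n w" "(i,k)" "(j,k)"] by simp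
    then show False using ijk by simp
  qed
  have "card (snd ` Invs n w) \<le> card (Invs n w)" by (rule card_image_le[OF finite_Invs])
  moreover have "card (snd ` Invs n w) \<noteq> card (Invs n w)"
    using ninj inj_on_iff_eq_card[OF finite_Invs] by blast
  ultimately show ?thesis unfolding Q_def inv_len_Invs img by linarith
qed



definition mdeg :: "(nat \<Rightarrow>\<^sub>0 nat) \<Rightarrow> nat" where
  "mdeg m = sum (Poly_Mapping.lookup m) (Poly_Mapping.keys m)"

lemma mdeg_superset: "finite S \<Longrightarrow> Poly_Mapping.keys m \<subseteq> S \<Longrightarrow> mdeg m = sum (Poly_Mapping.lookup m) S"
  unfolding mdeg_def by (rule sum.mono_neutral_left) (auto simp: in_keys_iff)

lemma sum_two: "finite S \<Longrightarrow> i \<in> S \<Longrightarrow> Suc i \<in> S \<Longrightarrow> sum f S = f i + f (Suc i) + sum f (S - {i, Suc i})"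
proof -
  assume S: "finite S" "i \<in> S" "Suc i \<in> S"
  have "sum f S = f i + sum f (S - {i})" using S by (simp add: sum.remove)
  also have "sum f (S - {i}) = f (Suc i) + sum f (S - {i} - {Suc i})" using S by (simp add: sum.remove)
  also have "S - {i} - {Suc i} = S - {i, Suc i}" by auto
  finally show ?thesis by (simp add: add.assoc)
qed

lemma mdeg_upd2: "mdeg (upd2 i g h m) + Poly_Mapping.lookup m i + Poly_Mapping.lookup m (Suc i) = mdeg m + g + h"
proof -
  define S where "S = Poly_Mapping.keys m \<union> {i, Suc i}"
  have fS: "finite S" by (simp add: S_def)
  have k1: "Poly_Mapping.keys m \<subseteq> S" by (auto simp: S_def)
  have k2: "Poly_Mapping.keys (upd2 i g h m) \<subseteq> S"
    by (auto simp: S_def in_keys_iff lookup_upd2 split: if_splits)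
  have rest: "sum (Poly_Mapping.lookup (upd2 i g h m)) (S - {i, Suc i}) = sum (Poly_Mapping.lookup m) (S - {i, Suc i})"
    by (rule sum.cong) (auto simp: lookup_upd2)
  have iS: "i \<in> S" "Suc i \<in> S" by (auto simp: S_def)
  have d1: "mdeg m = Poly_Mapping.lookup m i + Poly_Mapping.lookup m (Suc i) + sum (Poly_Mapping.lookup m) (S - {i, Suc i})"
    using mdeg_superset[OF fS k1] sum_two[OF fS iS] by simp
  have d2: "mdeg (upd2 i g h m) = Poly_Mapping.lookup (upd2 i g h m) i + Poly_Mapping.lookup (upd2 i g h m) (Suc i) + sum (Poly_Mapping.lookup (upd2 i g h m)) (S - {i, Suc i})"
    using mdeg_superset[OF fS k2] sum_two[OF fS iS] by simp
  have l: "Poly_Mapping.lookup (upd2 i g h m) i = g" "Poly_Mapping.lookup (upd2 i g h m) (Suc i) = h"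
    by (simp_all add: lookup_upd2)
  show ?thesis using d1 d2 rest l by simp
qed

definition Inv :: "nat \<Rightarrow> (nat \<Rightarrow> nat) \<Rightarrow> mpoly \<Rightarrow> bool" where
  "Inv n w f \<longleftrightarrow> (\<forall>m\<in>Poly_Mapping.keys f. mdeg m = inv_len n w \<and> (\<forall>k. 1 \<le> k \<longrightarrow> Poly_Mapping.lookup m k \<le> Q n w k))"

lemma Inv_step:
  assumes inv: "Inv n (w \<circ> transpose i (Suc i)) f"
    and i: "1 \<le> i" "i < n" and asc: "w i < w (Suc i)"
    and desc: "\<And>p. 1 \<le> p \<Longrightarrow> p < i \<Longrightarrow> w (Suc p) < w p"
  shows "Inv n w (dd i f)"
  unfolding Inv_def
proof
  fix m' assume "m' \<in> Poly_Mapping.keys (dd i f)"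
  then obtain m where m: "m \<in> Poly_Mapping.keys f" "m' \<in> Poly_Mapping.keys (ddm i m)"
    using keys_dd by blast
  define a where "a = Poly_Mapping.lookup m i"
  define b where "b = Poly_Mapping.lookup m (Suc i)"
  obtain g where g: "m' = upd2 i g (a + b - 1 - g) m" "min a b \<le> g" "g < max a b"
    using keys_ddm m(2) unfolding a_def b_def by blast
  have im: "mdeg m = inv_len n (w \<circ> transpose i (Suc i))"
    and bd: "\<And>k. 1 \<le> k \<Longrightarrow> Poly_Mapping.lookup m k \<le> Q n (w \<circ> transpose i (Suc i)) k"
    using inv m(1) unfolding Inv_def by auto
  have "mdeg m' + a + b = mdeg m + g + (a + b - 1 - g)"
    using mdeg_upd2[of i g "a + b - 1 - g" m] by (simp add: g(1) a_def b_def)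
  moreover have "g + (a + b - 1 - g) = a + b - 1" using g by simp
  moreover have "a + b \<ge> 1" using g by simp
  ultimately have "mdeg m' = mdeg m - 1" by simp
  then show "mdeg m' = inv_len n w \<and> (\<forall>k. 1 \<le> k \<longrightarrow> Poly_Mapping.lookup m' k \<le> Q n w k)"
  proof (intro conjI allI impI)
    assume "mdeg m' = mdeg m - 1"
    then show "mdeg m' = inv_len n w" using im inv_len_swap[OF i asc] by simp
  next
    fix k :: nat assume k: "1 \<le> k"
    have qa: "a \<le> Suc (Q n w (Suc i))"
      using bd[of i] i Q_i[OF asc, of n] by (simp add: a_def)
    have qb: "b \<le> Q n w (Suc i)"
      using bd[of "Suc i"] Q_Suc_i[OF asc, of n] by (simp add: b_def)
    have top: "max a b - 1 \<le> Q n w (Suc i)" using qa qb by simp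
    show "Poly_Mapping.lookup m' k \<le> Q n w k"
    proof (cases "k = i")
      case True
      have "Poly_Mapping.lookup m' k = g" using True g(1) by (simp add: lookup_upd2)
      then show ?thesis using top g Q_mono[of n w i] True by simp
    next
      case ki: False
      show ?thesis
      proof (cases "k = Suc i")
        case True
        have "Poly_Mapping.lookup m' k = a + b - 1 - g" using True g(1) by (simp add: lookup_upd2)
        then show ?thesis using top g True by simp
      next
        case False
        then have "Poly_Mapping.lookup m' k = Poly_Mapping.lookup m k" using ki g(1) by (simp add: lookup_upd2)
        moreover have "Q n (w \<circ> transpose i (Suc i)) k \<le> Q n w k"
        proof (cases "k < i")
          case True
          then show ?thesis using Q_other_small[OF k True asc i(2) desc] by simp
        next
          case False
          then have "Suc i < k" using ki \<open>k \<noteq> Suc i\<close> by simp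
          then show ?thesis by (rule Q_other_big)
        qed
        ultimately show ?thesis using bd[OF k] by simp
      qed
    qed
  qed
qed



lemma var_pow: "var i ^ e = Defs.mono (Poly_Mapping.single i e)"
proof (induction e)
  case 0 then show ?case by (simp add: Defs.mono_def)
next
  case (Suc e)
  then show ?case by (simp add: var_mult_mono single_add[symmetric])
qed

lemma mono_mult: "Defs.mono a * Defs.mono b = Defs.mono (a + b)"
  by (simp add: Defs.mono_def mult_single)

lemma prod_mono: "finite A \<Longrightarrow> (\<Prod>i\<in>A. Defs.mono (g i)) = Defs.mono (\<Sum>i\<in>A. g i)"
  by (induction A rule: finite_induct) (simp_all add: Defs.mono_def mono_mult[unfolded Defs.mono_def])

definition delta :: "nat \<Rightarrow> (nat \<Rightarrow>\<^sub>0 nat)" where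
  "delta n = (\<Sum>i\<in>{1..<n}. Poly_Mapping.single i (n - i))"

lemma lookup_delta: "Poly_Mapping.lookup (delta n) k = (if k \<in> {1..<n} then n - k else 0)"
  by (simp add: delta_def lookup_sum lookup_single when_def sum.delta')

lemma S_longest: "(\<Prod>i\<in>{1..<n}. var i ^ (n - i)) = Defs.mono (delta n)"
  by (simp add: var_pow prod_mono delta_def)

lemma inv_len_longest: "inv_len n (longest n) = (\<Sum>i\<in>{1..<n}. n - i)"
proof -
  have "Invs n (longest n) = Sigma {1..<n} (\<lambda>i. {i<..n})"
    by (auto simp: Invs_def longest_def)
  then have "card (Invs n (longest n)) = (\<Sum>i\<in>{1..<n}. card {i<..n})"
    by (simp add: card_SigmaI)
  then show ?thesis by (simp add: inv_len_Invs)
qed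

lemma mdeg_delta: "mdeg (delta n) = (\<Sum>i\<in>{1..<n}. n - i)"
proof -
  have "Poly_Mapping.keys (delta n) \<subseteq> {1..<n}"
    by (auto simp: in_keys_iff lookup_delta split: if_splits)
  then have "mdeg (delta n) = sum (Poly_Mapping.lookup (delta n)) {1..<n}"
    by (rule mdeg_superset[rotated]) simp
  also have "\<dots> = (\<Sum>i\<in>{1..<n}. n - i)"
    by (rule sum.cong) (simp_all add: lookup_delta)
  finally show ?thesis .
qed

lemma Inv_base: "Inv n (longest n) (Defs.mono (delta n))"
  unfolding Inv_def
proof (intro ballI conjI allI impI)
  fix m assume "m \<in> Poly_Mapping.keys (Defs.mono (delta n))"
  then have m: "m = delta n" by (simp add: keys_mono)
  show "mdeg m = inv_len n (longest n)" using m mdeg_delta inv_len_longest by simp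
  fix k :: nat assume "1 \<le> k"
  then show "Poly_Mapping.lookup m k \<le> Q n (longest n) k"
    using m Q_longest[of k n] by (simp add: lookup_delta)
qed

lemma main_inv:
  assumes fam: "is_schubert_family n S"
  shows "w permutes {1..n} \<Longrightarrow> Inv n w (S w)"
proof (induction "n * n - inv_len n w" arbitrary: w rule: less_induct)
  case less
  have perm: "w permutes {1..n}" by fact
  have injw: "inj w" using perm by (rule permutes_inj)
  show ?case
  proof (cases "\<exists>i. 1 \<le> i \<and> i < n \<and> w i < w (Suc i)")
    case False
    have "w = longest n"
    proof (rule no_ascent_longest[OF perm])
      fix i assume "1 \<le> i" "i < n"
      then have "\<not> w i < w (Suc i)" using False by blast
      moreover have "w i \<noteq> w (Suc i)"
      proof
        assume "w i = w (Suc i)"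
        then have "i = Suc i" by (rule injD[OF injw])
        then show False by simp
      qed
      ultimately show "w (Suc i) < w i" by linarith
    qed
    moreover have "S (longest n) = Defs.mono (delta n)"
      using fam unfolding is_schubert_family_def S_longest by blast
    ultimately show ?thesis using Inv_base by simp
  next
    case True
    define i where "i = (LEAST i. 1 \<le> i \<and> i < n \<and> w i < w (Suc i))"
    have i: "1 \<le> i" "i < n" "w i < w (Suc i)"
      using LeastI_ex[OF True] unfolding i_def by auto
    have desc: "w (Suc p) < w p" if "1 \<le> p" "p < i" for p
    proof -
      have "\<not> (1 \<le> p \<and> p < n \<and> w p < w (Suc p))"
        using not_less_Least[of p "\<lambda>i. 1 \<le> i \<and> i < n \<and> w i < w (Suc i)"] that unfolding i_def by blast
      then have "\<not> w p < w (Suc p)" using that i by simp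
      moreover have "w p \<noteq> w (Suc p)"
      proof
        assume "w p = w (Suc p)"
        then have "p = Suc p" by (rule injD[OF injw])
        then show False by simp
      qed
      ultimately show ?thesis by linarith
    qed
    let ?t = "transpose i (Suc i)"
    define u where "u = w \<circ> ?t"
    have permu: "u permutes {1..n}"
      unfolding u_def by (rule permutes_compose[OF permutes_swap_id perm]) (use i in auto)
    have lu: "inv_len n u = Suc (inv_len n w)"
      unfolding u_def by (rule inv_len_swap[OF i])
    have "n * n - inv_len n u < n * n - inv_len n w"
      using lu inv_len_le[of n u] by simp
    then have IH: "Inv n u (S u)" using less.hyps permu by blast
    have ut: "u \<circ> ?t = w" by (simp add: u_def comp_assoc)
    have ax: "\<forall>w i. w permutes {1..n} \<longrightarrow> 1 \<le> i \<longrightarrow> i < n \<longrightarrow>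
        divdiff i (S w) = (if inv_len n (w \<circ> transpose i (Suc i)) + 1 = inv_len n w
           then S (w \<circ> transpose i (Suc i)) else 0)"
      using fam unfolding is_schubert_family_def by (rule conjunct2)
    have "divdiff i (S u) = (if inv_len n (u \<circ> ?t) + 1 = inv_len n u then S (u \<circ> ?t) else 0)"
      using ax[rule_format, OF permu i(1) i(2)] .
    also have "\<dots> = S w" by (simp only: ut lu) simp
    finally have "divdiff i (S u) = S w" .
    then have "S w = dd i (S u)" by (simp add: divdiff_eq)
    then show ?thesis using Inv_step[OF IH[unfolded u_def] i desc] by (simp add: u_def)
  qed
qed



definition inV :: "mpoly \<Rightarrow> bool" where
  "inV f \<longleftrightarrow> (\<forall>m\<in>Poly_Mapping.keys f. \<exists>k\<in>Poly_Mapping.keys m. k \<noteq> 1)"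

lemma keys_add_nat: "k \<in> Poly_Mapping.keys (a :: nat \<Rightarrow>\<^sub>0 nat) \<Longrightarrow> k \<in> Poly_Mapping.keys (a + b)"
  by (simp add: in_keys_iff lookup_add)

lemma inV_mult: "inV f \<Longrightarrow> inV (f * g)"
proof -
  assume f: "inV f"
  show "inV (f * g)" unfolding inV_def
  proof
    fix m assume "m \<in> Poly_Mapping.keys (f * g)"
    then obtain a b where ab: "m = a + b" "a \<in> Poly_Mapping.keys f" "b \<in> Poly_Mapping.keys g"
      using keys_mult by blast
    then obtain k where "k \<in> Poly_Mapping.keys a" "k \<noteq> 1" using f unfolding inV_def by blast
    then show "\<exists>k\<in>Poly_Mapping.keys m. k \<noteq> 1" using ab keys_add_nat by blast
  qed
qed

lemma inV_mult2: "inV g \<Longrightarrow> inV (f * g)"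
  using inV_mult[of g f] by (simp add: mult.commute)

lemma inV_add: "inV f \<Longrightarrow> inV g \<Longrightarrow> inV (f + g)"
  unfolding inV_def using keys_add[of f g] by blast

lemma inV_zero: "inV 0" by (simp add: inV_def)

definition Hset :: "nat \<Rightarrow> nat \<Rightarrow> (nat \<Rightarrow>\<^sub>0 nat) set" where
  "Hset i j = {m. Poly_Mapping.keys m \<subseteq> {1..i} \<and> (\<Sum>k\<in>{1..i}. Poly_Mapping.lookup m k) = j}"

lemma finite_Hset: "finite (Hset i j)"
proof -
  let ?f = "\<lambda>m. restrict (Poly_Mapping.lookup m) {1..i}"
  have inj: "inj_on ?f (Hset i j)"
  proof
    fix x y assume x: "x \<in> Hset i j" and y: "y \<in> Hset i j" and e: "?f x = ?f y"
    show "x = y"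
    proof (rule poly_mapping_eqI)
      fix k
      show "Poly_Mapping.lookup x k = Poly_Mapping.lookup y k"
      proof (cases "k \<in> {1..i}")
        case True then show ?thesis using fun_cong[OF e, of k] by simp
      next
        case False
        then have "k \<notin> Poly_Mapping.keys x" "k \<notin> Poly_Mapping.keys y" using x y by (auto simp: Hset_def)
        then show ?thesis by (simp add: in_keys_iff)
      qed
    qed
  qed
  have "?f ` Hset i j \<subseteq> PiE {1..i} (\<lambda>_. {0..j})"
  proof
    fix g assume "g \<in> ?f ` Hset i j"
    then obtain m where m: "m \<in> Hset i j" "g = ?f m" by blast
    have "Poly_Mapping.lookup m k \<le> j" if "k \<in> {1..i}" for k
    proof -
      have "Poly_Mapping.lookup m k \<le> (\<Sum>k\<in>{1..i}. Poly_Mapping.lookup m k)"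
        by (rule member_le_sum) (use that in auto)
      then show ?thesis using m by (simp add: Hset_def)
    qed
    then show "g \<in> PiE {1..i} (\<lambda>_. {0..j})" using m by auto
  qed
  then have "finite (?f ` Hset i j)" by (rule finite_subset) (simp add: finite_PiE)
  then show ?thesis using inj by (rule finite_imageD)
qed

lemma single_in_Hset: "1 \<le> i \<Longrightarrow> Poly_Mapping.single 1 j \<in> Hset i j"
  by (auto simp: Hset_def lookup_single when_def sum.delta' split: if_splits)

lemma complete_h_split:
  assumes "1 \<le> i"
  shows "\<exists>r. inV r \<and> complete_h i j = Defs.mono (Poly_Mapping.single 1 j) + r"
proof -
  have ch: "complete_h i j = (\<Sum>m\<in>Hset i j. Defs.mono m)"
    by (simp add: complete_h_def Hset_def)
  have "complete_h i j = Defs.mono (Poly_Mapping.single 1 j) + (\<Sum>m\<in>Hset i j - {Poly_Mapping.single 1 j}. Defs.mono m)"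
    unfolding ch using finite_Hset single_in_Hset[OF assms] by (simp add: sum.remove)
  moreover have "inV (\<Sum>m\<in>Hset i j - {Poly_Mapping.single 1 j}. Defs.mono m)"
    unfolding inV_def
  proof
    fix m assume "m \<in> Poly_Mapping.keys (\<Sum>m\<in>Hset i j - {Poly_Mapping.single 1 j}. Defs.mono m)"
    then have m: "m \<in> Hset i j" "m \<noteq> Poly_Mapping.single 1 j"
      using keys_sum[of Defs.mono "Hset i j - {Poly_Mapping.single 1 j}"] by (auto simp: keys_mono)
    show "\<exists>k\<in>Poly_Mapping.keys m. k \<noteq> 1"
    proof (rule ccontr)
      assume "\<not> (\<exists>k\<in>Poly_Mapping.keys m. k \<noteq> 1)"
      then have sub: "Poly_Mapping.keys m \<subseteq> {1}" by auto
      have ms: "m = Poly_Mapping.single 1 (Poly_Mapping.lookup m 1)"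
      proof (rule poly_mapping_eqI)
        fix k show "Poly_Mapping.lookup m k = Poly_Mapping.lookup (Poly_Mapping.single 1 (Poly_Mapping.lookup m 1)) k"
          using sub by (cases "k = 1") (auto simp: lookup_single in_keys_iff)
      qed
      have "(\<Sum>k\<in>{1..i}. Poly_Mapping.lookup m k) = j" using m by (simp add: Hset_def)
      moreover have "(\<Sum>k\<in>{1..i}. Poly_Mapping.lookup m k) = Poly_Mapping.lookup m 1"
        using assms by (subst ms) (simp add: lookup_single when_def sum.delta')
      ultimately have "m = Poly_Mapping.single 1 j" using ms by simp
      then show False using m by simp
    qed
  qed
  ultimately show ?thesis by blast
qed

lemma prod_split:
  assumes "finite K" "0 \<notin> K"
  shows "\<exists>r. inV r \<and> (\<Prod>i\<in>K. complete_h i (Poly_Mapping.lookup a i)) = Defs.mono (Poly_Mapping.single 1 (\<Sum>i\<in>K. Poly_Mapping.lookup a i)) + r"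
  using assms
proof (induction K rule: finite_induct)
  case empty
  then show ?case using inV_zero by (auto simp: Defs.mono_def)
next
  case (insert x K)
  then obtain r where r: "inV r" "(\<Prod>i\<in>K. complete_h i (Poly_Mapping.lookup a i)) = Defs.mono (Poly_Mapping.single 1 (\<Sum>i\<in>K. Poly_Mapping.lookup a i)) + r"
    by auto
  have "1 \<le> x" using insert.prems by (cases x) auto
  then obtain r1 where r1: "inV r1" "complete_h x (Poly_Mapping.lookup a x) = Defs.mono (Poly_Mapping.single 1 (Poly_Mapping.lookup a x)) + r1"
    using complete_h_split by blast
  let ?A = "Defs.mono (Poly_Mapping.single 1 (Poly_Mapping.lookup a x))"
  let ?B = "Defs.mono (Poly_Mapping.single 1 (\<Sum>i\<in>K. Poly_Mapping.lookup a i))"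
  have "(\<Prod>i\<in>insert x K. complete_h i (Poly_Mapping.lookup a i)) = (?A + r1) * (?B + r)"
    using insert r r1 by simp
  also have "\<dots> = ?A * ?B + (?A * r + r1 * (?B + r))" by (simp add: algebra_simps)
  also have "?A * ?B = Defs.mono (Poly_Mapping.single 1 (\<Sum>i\<in>insert x K. Poly_Mapping.lookup a i))"
    using insert by (simp add: mono_mult single_add)
  finally show ?case using inV_add[OF inV_mult2[OF r(1)] inV_mult[OF r1(1)]] by blast
qed

lemma chm_key:
  assumes "complete_hom_monomial f"
  shows "\<exists>D. Poly_Mapping.single 1 D \<in> Poly_Mapping.keys f"
proof -
  obtain a :: "nat \<Rightarrow>\<^sub>0 nat" where a: "0 \<notin> Poly_Mapping.keys a" "f = (\<Prod>i\<in>Poly_Mapping.keys a. complete_h i (Poly_Mapping.lookup a i))"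
    using assms unfolding complete_hom_monomial_def by blast
  define D where "D = (\<Sum>i\<in>Poly_Mapping.keys a. Poly_Mapping.lookup a i)"
  obtain r where r: "inV r" "f = Defs.mono (Poly_Mapping.single 1 D) + r"
    using prod_split[of "Poly_Mapping.keys a" a] a unfolding D_def by auto
  have "Poly_Mapping.lookup r (Poly_Mapping.single 1 D) = 0"
  proof (rule ccontr)
    assume "Poly_Mapping.lookup r (Poly_Mapping.single 1 D) \<noteq> 0"
    then have "Poly_Mapping.single 1 D \<in> Poly_Mapping.keys r" by (simp add: in_keys_iff)
    from bspec[OF r(1)[unfolded inV_def] this]
    have "\<exists>k\<in>Poly_Mapping.keys (Poly_Mapping.single (1::nat) D). k \<noteq> 1" .
    then show False by (cases "D = 0") auto
  qed
  then have "Poly_Mapping.lookup f (Poly_Mapping.single 1 D) = 1"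
    using r(2) by (simp add: lookup_add Defs.mono_def)
  then have "Poly_Mapping.single 1 D \<in> Poly_Mapping.keys f" by (simp add: in_keys_iff)
  then show ?thesis by (rule exI[of _ D])
qed

theorem lemma19:
  fixes n :: nat and w :: "nat \<Rightarrow> nat" and S :: "(nat \<Rightarrow> nat) \<Rightarrow> mpoly"
  assumes "is_schubert_family n S"
    and "w permutes {1..n}"
    and "contains_321 n w"
  shows "\<not> complete_hom_monomial (S w)"
proof
  assume chm: "complete_hom_monomial (S w)"
  obtain D where D: "Poly_Mapping.single 1 D \<in> Poly_Mapping.keys (S w)"
    using chm_key[OF chm] by auto
  have inv: "Inv n w (S w)" using main_inv[OF assms(1) assms(2)] .
  have all: "mdeg (Poly_Mapping.single 1 D) = inv_len n w \<and> (\<forall>k. 1 \<le> k \<longrightarrow> Poly_Mapping.lookup (Poly_Mapping.single (1::nat) D) k \<le> Q n w k)"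
    using bspec[OF inv[unfolded Inv_def] D] .
  have "mdeg (Poly_Mapping.single (1::nat) D) = D"
    by (subst mdeg_superset[of "{1}"]) auto
  then have "D = inv_len n w" using all by simp
  moreover have "D \<le> Q n w 1" using all[THEN conjunct2, rule_format, of 1] by simp
  ultimately show False using Q_321[OF assms(3)] by simp
qed

end
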